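(* Let ${\mathbb X}$ be a real inner product space with ${\mathbb X}\ne\{0\}$, let $M\colon[0,\infty)\times[0,\infty)\to[0,\infty)$ be symmetric and moderately increasing, and suppose $\rho_M(x,y)=\dfrac{\Vert x-y\Vert}{M(\Vert x\Vert,\Vert y\Vert)}$ is a metric on ${\mathbb X}$. Then $\rho_M$ is locally star--shaped.
   Context: Convention $0/0=0$. A function $f\colon[0,\infty)\to[0,\infty)$ is moderately increasing if it is increasing and $f(t)/t$ is decreasing; $M$ is moderately increasing if $M(x,\cdot)$ and $M(\cdot,x)$ are moderately increasing for each fixed $x$. A metric $d$ is locally star--shaped if for every $x$ there is $r_0>0$ such that for every $0<r<r_0$ the ball $B_d(x,r)=\{y: d(x,y)<r\}$ is star--shaped with respect to $x$, i.e. every ray emanating from $x$ meets $\partial B_d(x,r)$ exactly once. *)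

theory Defs
  imports "HOL-Analysis.Analysis"
begin

definition mod_incr :: "(real \<Rightarrow> real) \<Rightarrow> bool" where
  "mod_incr f \<longleftrightarrow>
     (\<forall>s t. 0 \<le> s \<longrightarrow> s \<le> t \<longrightarrow> f s \<le> f t) \<and>
     (\<forall>s t. 0 < s \<longrightarrow> s \<le> t \<longrightarrow> f t / t \<le> f s / s)"

definition mod_incr2 :: "(real \<Rightarrow> real \<Rightarrow> real) \<Rightarrow> bool" where
  "mod_incr2 M \<longleftrightarrow> (\<forall>x\<ge>0. mod_incr (\<lambda>t. M x t) \<and> mod_incr (\<lambda>t. M t x))"

text \<open>The quantity rho_M; division uses Isabelle's convention a/0 = 0 (in particular 0/0 = 0).\<close>
definition rhoM :: "(real \<Rightarrow> real \<Rightarrow> real) \<Rightarrow> 'a::real_normed_vector \<Rightarrow> 'a \<Rightarrow> real" where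
  "rhoM M x y = norm (x - y) / M (norm x) (norm y)"

definition is_metric :: "('a \<Rightarrow> 'a \<Rightarrow> real) \<Rightarrow> bool" where
  "is_metric d \<longleftrightarrow>
     (\<forall>x y. 0 \<le> d x y) \<and> (\<forall>x y. d x y = 0 \<longleftrightarrow> x = y) \<and>
     (\<forall>x y. d x y = d y x) \<and> (\<forall>x y z. d x z \<le> d x y + d y z)"

definition dball :: "('a \<Rightarrow> 'a \<Rightarrow> real) \<Rightarrow> 'a \<Rightarrow> real \<Rightarrow> 'a set" where
  "dball d x r = {y. d x y < r}"

definition star_shaped_wrt :: "'a::real_normed_vector set \<Rightarrow> 'a \<Rightarrow> bool" where
  "star_shaped_wrt B x \<longleftrightarrow>
     (\<forall>v. v \<noteq> 0 \<longrightarrow> (\<exists>!t. 0 \<le> t \<and> x + t *\<^sub>R v \<in> frontier B))"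

definition locally_star_shaped :: "('a::real_normed_vector \<Rightarrow> 'a \<Rightarrow> real) \<Rightarrow> bool" where
  "locally_star_shaped d \<longleftrightarrow>
     (\<forall>x. \<exists>r0>0. \<forall>r. 0 < r \<and> r < r0 \<longrightarrow> star_shaped_wrt (dball d x r) x)"

end

theory Submission
  imports Defs
begin
lemma rho_pos:
  fixes p q :: "'a::real_normed_vector"
  assumes metric: "is_metric (rhoM M :: 'a \<Rightarrow> 'a \<Rightarrow> real)"
    and nonneg: "\<forall>s t. 0 \<le> s \<longrightarrow> 0 \<le> t \<longrightarrow> 0 \<le> M s t"
    and "p \<noteq> q"
  shows "M (norm p) (norm q) > 0"
proof -
  have "rhoM M p q \<noteq> 0" using metric assms(3) unfolding is_metric_def by blast
  hence "M (norm p) (norm q) \<noteq> 0" unfolding rhoM_def by auto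
  moreover have "M (norm p) (norm q) \<ge> 0" using nonneg by simp
  ultimately show ?thesis by linarith
qed


lemma Mpos:
  fixes x :: "'a::real_normed_vector"
  assumes metric: "is_metric (rhoM M :: 'a \<Rightarrow> 'a \<Rightarrow> real)"
    and nonneg: "\<forall>s t. 0 \<le> s \<longrightarrow> 0 \<le> t \<longrightarrow> 0 \<le> M s t"
    and x: "x \<noteq> 0" and b: "b \<ge> 0"
  shows "M (norm x) b > 0"
proof -
  define q where "q = (- (b / norm x)) *\<^sub>R x"
  have nx: "norm x > 0" using x by simp
  have nq: "norm q = b" unfolding q_def using nx b by (simp add: abs_of_nonneg)
  have "x \<noteq> q"
  proof
    assume h: "x = q"
    have "x + (b / norm x) *\<^sub>R x = q + (b / norm x) *\<^sub>R x" using h by simp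
    also have "\<dots> = 0" unfolding q_def by (simp add: scaleR_left.minus)
    finally have "(1 + b/norm x) *\<^sub>R x = 0" by (simp add: scaleR_left_distrib)
    moreover have "1 + b/norm x > 0" using nx b by (simp add: add_pos_nonneg)
    ultimately show False using x by simp
  qed
  have "rhoM M x q \<noteq> 0" using metric \<open>x \<noteq> q\<close> unfolding is_metric_def by blast
  hence "M (norm x) (norm q) \<noteq> 0" unfolding rhoM_def by auto
  moreover have "M (norm x) (norm q) \<ge> 0" using nonneg by simp
  ultimately show ?thesis using nq by simp
qed

lemma modinc_cont:
  assumes mi: "mod_incr f" and p: "0 < p" shows "isCont f p"
proof -
  have mono: "\<And>s t. 0 \<le> s \<Longrightarrow> s \<le> t \<Longrightarrow> f s \<le> f t"
    and dec: "\<And>s t. 0 < s \<Longrightarrow> s \<le> t \<Longrightarrow> f t / t \<le> f s / s"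
    using mi unfolding mod_incr_def by auto
  have bnd: "min 1 (q/p) * f p \<le> f q \<and> f q \<le> max 1 (q/p) * f p" if q: "q > 0" for q
  proof (cases "q \<le> p")
    case True
    have "f q \<le> f p" using mono True q by simp
    moreover have "f p / p \<le> f q / q" using dec True q by simp
    hence "q / p * f p \<le> f q" using p q by (simp add: field_simps)
    moreover have "min 1 (q/p) = q/p" "max 1 (q/p) = 1" using True p by auto
    ultimately show ?thesis by simp
  next
    case False
    have "f p \<le> f q" using mono False p by simp
    moreover have "f q / q \<le> f p / p" using dec False p by simp
    hence "f q \<le> q / p * f p" using p q by (simp add: field_simps)
    moreover have "min 1 (q/p) = 1" "max 1 (q/p) = q/p" using False p by auto
    ultimately show ?thesis by simp
  qed
  have ev: "eventually (\<lambda>q. q > 0) (at p)"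
    using order_tendstoD(1)[OF tendsto_ident_at p] by simp
  have l1: "((\<lambda>q. min 1 (q/p) * f p) \<longlongrightarrow> f p) (at p)"
  proof -
    have "((\<lambda>q. min 1 (q/p) * f p) \<longlongrightarrow> min 1 (p/p) * f p) (at p)"
      by (intro tendsto_intros) (use p in auto)
    thus ?thesis using p by simp
  qed
  have l2: "((\<lambda>q. max 1 (q/p) * f p) \<longlongrightarrow> f p) (at p)"
  proof -
    have "((\<lambda>q. max 1 (q/p) * f p) \<longlongrightarrow> max 1 (p/p) * f p) (at p)"
      by (intro tendsto_intros) (use p in auto)
    thus ?thesis using p by simp
  qed
  have e1: "eventually (\<lambda>q. min 1 (q/p) * f p \<le> f q) (at p)"
    by (rule eventually_mono[OF ev]) (use bnd in blast)
  have e2: "eventually (\<lambda>q. f q \<le> max 1 (q/p) * f p) (at p)"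
    by (rule eventually_mono[OF ev]) (use bnd in blast)
  have "(f \<longlongrightarrow> f p) (at p)"
    by (rule tendsto_sandwich[OF e1 e2 l1 l2])
  thus ?thesis unfolding isCont_def .
qed


lemma exist_frontier:
  fixes x v :: "'a::real_normed_vector"
  assumes "x \<in> B" "x + t1 *\<^sub>R v \<notin> B" "t1 \<ge> 0"
  shows "\<exists>t\<ge>0. x + t *\<^sub>R v \<in> frontier B"
proof -
  have "closed_segment x (x + t1 *\<^sub>R v) \<inter> frontier B \<noteq> {}"
  proof (rule connected_Int_frontier)
    show "connected (closed_segment x (x + t1 *\<^sub>R v))" by (rule connected_segment)
    show "closed_segment x (x + t1 *\<^sub>R v) \<inter> B \<noteq> {}"
      using assms(1) ends_in_segment(1)[of x "x + t1 *\<^sub>R v"] by blast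
    show "closed_segment x (x + t1 *\<^sub>R v) - B \<noteq> {}"
      using assms(2) ends_in_segment(2)[of "x + t1 *\<^sub>R v" x] by blast
  qed
  then obtain y where y: "y \<in> closed_segment x (x + t1 *\<^sub>R v)" "y \<in> frontier B" by blast
  then obtain u where u: "0 \<le> u" "y = (1 - u) *\<^sub>R x + u *\<^sub>R (x + t1 *\<^sub>R v)"
    unfolding closed_segment_def by auto
  have "y = x + (u * t1) *\<^sub>R v" using u by (simp add: algebra_simps)
  moreover have "u * t1 \<ge> 0" using u assms by simp
  ultimately show ?thesis using y by blast
qed





theorem lemma5p4:
  fixes M :: "real \<Rightarrow> real \<Rightarrow> real"
  assumes nontriv: "\<exists>x::'a::real_inner. x \<noteq> 0"
    and nonneg: "\<forall>s t. 0 \<le> s \<longrightarrow> 0 \<le> t \<longrightarrow> 0 \<le> M s t"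
    and symm: "\<forall>s t. 0 \<le> s \<longrightarrow> 0 \<le> t \<longrightarrow> M s t = M t s"
    and modinc: "mod_incr2 M"
    and metric: "is_metric (rhoM M :: 'a \<Rightarrow> 'a \<Rightarrow> real)"
  shows "locally_star_shaped (rhoM M :: 'a \<Rightarrow> 'a \<Rightarrow> real)"
proof -
  have Mpos0: "\<And>p q::'a. p \<noteq> q \<Longrightarrow> M (norm p) (norm q) > 0"
    using rho_pos[OF metric nonneg] by blast
  have rself: "\<And>y::'a. rhoM M y y = 0" using metric unfolding is_metric_def by blast
  have uniq: "\<exists>!t. 0 \<le> t \<and> P t"
    if ex: "\<exists>t\<ge>0. P t" and un: "\<And>t t'. 0 \<le> t \<Longrightarrow> t < t' \<Longrightarrow> P t \<Longrightarrow> P t' \<Longrightarrow> False"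
    for P :: "real \<Rightarrow> bool"
  proof -
    from ex obtain t where t: "0 \<le> t" "P t" by blast
    show ?thesis
    proof (rule ex1I[of _ t])
      show "0 \<le> t \<and> P t" using t by simp
      fix t' assume t': "0 \<le> t' \<and> P t'"
      show "t' = t"
      proof (rule ccontr)
        assume "t' \<noteq> t"
        hence "t < t' \<or> t' < t" by linarith
        thus False using un t t' by blast
      qed
    qed
  qed
  show ?thesis unfolding locally_star_shaped_def
  proof
    fix x :: 'a
    show "\<exists>r0>0. \<forall>r. 0 < r \<and> r < r0 \<longrightarrow> star_shaped_wrt (dball (rhoM M) x r) x"
    proof (cases "x = 0")
      case True
      obtain z :: 'a where z: "z \<noteq> 0" using nontriv by blast
      define e where "e = (1 / norm z) *\<^sub>R z"
      have ne: "norm e = 1" using z by (simp add: e_def)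
      have e0: "0 \<noteq> e" using ne by auto
      have M01: "M 0 1 > 0" using Mpos0[OF e0] ne by simp
      have psi: "\<And>w::'a. rhoM M 0 w = norm w / M 0 (norm w)" by (simp add: rhoM_def)
      have psimono: "rhoM M 0 w \<le> rhoM M 0 z" if w: "w \<noteq> 0" and wz: "norm w \<le> norm z" for w z :: 'a
      proof -
        have z0: "z \<noteq> 0" using w wz by auto
        have mw: "M 0 (norm w) > 0" using Mpos0[of 0 w] w by simp
        have mz: "M 0 (norm z) > 0" using Mpos0[of 0 z] z0 by simp
        have "mod_incr (\<lambda>t. M 0 t)" using modinc unfolding mod_incr2_def by simp
        hence "M 0 (norm z) / norm z \<le> M 0 (norm w) / norm w"
          unfolding mod_incr_def using w wz by simp
        hence "norm w / M 0 (norm w) \<le> norm z / M 0 (norm z)"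
          using mw mz w z0 by (simp add: field_simps)
        thus ?thesis using psi by simp
      qed
      show ?thesis
      proof (intro exI[of _ "1 / M 0 1"] conjI allI impI)
        show "1 / M 0 1 > 0" using M01 by simp
        fix r assume r: "0 < r \<and> r < 1 / M 0 1"
        let ?B = "dball (rhoM M) x r"
        have xB: "x \<in> ?B" using r rself by (simp add: dball_def)
        show "star_shaped_wrt ?B x" unfolding star_shaped_wrt_def
        proof (intro allI impI)
          fix v :: 'a assume v: "v \<noteq> 0"
          have ex: "\<exists>t\<ge>0. x + t *\<^sub>R v \<in> frontier ?B"
          proof (rule exist_frontier[OF xB])
            show "1 / norm v \<ge> 0" by simp
            have "norm ((1 / norm v) *\<^sub>R v) = 1" using v by simp
            hence "rhoM M x (x + (1 / norm v) *\<^sub>R v) = 1 / M 0 1" using True psi by simp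
            thus "x + (1 / norm v) *\<^sub>R v \<notin> ?B" using r by (simp add: dball_def)
          qed
          have un: False if t: "0 \<le> t" "t < t'" "x + t *\<^sub>R v \<in> frontier ?B" "x + t' *\<^sub>R v \<in> frontier ?B" for t t'
          proof -
            have "x + t' *\<^sub>R v \<in> closure ?B" using t(4) by (simp add: frontier_def)
            moreover have "(t' - t) * norm v > 0" using t v by simp
            ultimately obtain z where zB: "z \<in> ?B" and dz: "dist z (x + t' *\<^sub>R v) < (t' - t) * norm v"
              unfolding closure_approachable by blast
            have "norm (t' *\<^sub>R v) \<le> norm z + norm (t' *\<^sub>R v - z)" by (rule norm_triangle_sub)
            moreover have "norm (t' *\<^sub>R v - z) < (t' - t) * norm v"
              using dz True by (simp add: dist_norm norm_minus_commute)
            moreover have "norm (t' *\<^sub>R v) = t' * norm v" using t by simp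
            moreover have "\<bar>t'\<bar> = t'" using t by simp
            ultimately have nz: "norm z > t * norm v" using t by (simp add: left_diff_distrib abs_of_nonneg)
            have "ball 0 (norm z) \<subseteq> ?B"
            proof
              fix w :: 'a assume "w \<in> ball 0 (norm z)"
              hence wz: "norm w < norm z" by simp
              show "w \<in> ?B"
              proof (cases "w = 0")
                case True thus ?thesis using xB \<open>x = 0\<close> by simp
              next
                case False
                have "rhoM M 0 w \<le> rhoM M 0 z" using psimono[OF False] wz by simp
                moreover have "rhoM M 0 z < r" using zB True by (simp add: dball_def)
                ultimately show ?thesis using True by (simp add: dball_def)
              qed
            qed
            hence "ball 0 (norm z) \<subseteq> interior ?B" using interior_maximal open_ball by blast
            moreover have "x + t *\<^sub>R v \<in> ball 0 (norm z)" using nz True t by simp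
            ultimately show False using t(3) by (auto simp: frontier_def)
          qed
          show "\<exists>!t. 0 \<le> t \<and> x + t *\<^sub>R v \<in> frontier ?B"
            by (rule uniq[OF ex]) (rule un)
        qed
      qed
    next
      case False
      define a where "a = norm x"
      have a: "a > 0" using False by (simp add: a_def)
      have Mp: "\<And>b. b \<ge> 0 \<Longrightarrow> M a b > 0" using Mpos[OF metric nonneg False] a_def by simp
      have mi: "mod_incr (\<lambda>t. M a t)" using modinc a unfolding mod_incr2_def by simp
      have mono: "\<And>s t. 0 \<le> s \<Longrightarrow> s \<le> t \<Longrightarrow> M a s \<le> M a t"
        and dec: "\<And>s t. 0 < s \<Longrightarrow> s \<le> t \<Longrightarrow> M a t / t \<le> M a s / s"
        using mi unfolding mod_incr_def by auto
      define m where "m = M a (a/4)"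
      have m: "m > 0" using Mp a by (simp add: m_def)
      define c where "c = a / (20 * m)"
      have c: "c > 0" using a m by (simp add: c_def)
      have rho_eq: "\<And>y. rhoM M x y = norm (x - y) / M a (norm y)" by (simp add: rhoM_def a_def)
      have LB: "c \<le> rhoM M x y" if y: "a/4 \<le> norm (y - x)" for y
      proof -
        define u where "u = norm (y - x)"
        have u: "a/4 \<le> u" using y u_def by simp
        have ny: "norm y \<le> a + u" using norm_triangle_sub[of y x] unfolding a_def u_def by simp
        have "M a (norm y) \<le> M a (a + u)" using mono ny by simp
        also have "M a (a+u) / (a+u) \<le> m / (a/4)" using dec[of "a/4" "a+u"] a u by (simp add: m_def)
        hence "M a (a+u) \<le> 4 * m * (a+u) / a" using a u by (simp add: field_simps)
        finally have Mle: "M a (norm y) \<le> 4 * m * (a+u) / a" .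
        have Mpy: "M a (norm y) > 0" using Mp by simp
        have "u / (4 * m * (a+u) / a) \<le> u / M a (norm y)"
          using Mle Mpy u a m by (intro divide_left_mono) (auto intro!: divide_pos_pos mult_pos_pos)
        moreover have "c \<le> u / (4 * m * (a+u) / a)"
        proof -
          have apu: "a + u > 0" using a u by linarith
          have e1: "u / (4 * m * (a+u) / a) = (a / (4 * m)) * (u / (a + u))"
            using apu a m by (simp add: field_simps)
          have "1/5 \<le> u / (a + u)" using apu u by (simp add: field_simps)
          hence "(a / (4 * m)) * (1/5) \<le> (a / (4 * m)) * (u / (a + u))"
            using a m by (intro mult_left_mono) auto
          moreover have "c = (a / (4 * m)) * (1/5)" unfolding c_def by simp
          ultimately show ?thesis using e1 by (simp add: mult.commute)
        qed
        ultimately have "c \<le> u / M a (norm y)" by linarith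
        thus ?thesis using rho_eq u_def by (simp add: norm_minus_commute)
      qed
      have SM: "rhoM M x (x + s *\<^sub>R v) < rhoM M x (x + t *\<^sub>R v)"
        if st: "0 \<le> s" "s < t" "t * norm v \<le> a/4" and v: "v \<noteq> 0" for s t v
      proof -
        define gs where "gs = norm (x + s *\<^sub>R v)"
        define gt where "gt = norm (x + t *\<^sub>R v)"
        have nv: "norm v > 0" using v by simp
        have eqs: "rhoM M x (x + s *\<^sub>R v) = s * norm v / M a gs"
          using rho_eq st by (simp add: gs_def)
        have eqt: "rhoM M x (x + t *\<^sub>R v) = t * norm v / M a gt"
          using rho_eq st by (simp add: gt_def)
        have Ms: "M a gs > 0" and Mt: "M a gt > 0" using Mp by (simp_all add: gs_def gt_def)
        show ?thesis
        proof (cases "s = 0")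
          case True
          thus ?thesis using eqs eqt Mt st nv by simp
        next
          case False
          hence s: "s > 0" using st by simp
          have "a \<le> gs + norm (s *\<^sub>R v)" using norm_triangle_sub[of x "x + s *\<^sub>R v"]
            unfolding a_def gs_def by (simp add: norm_minus_commute)
          hence gs1: "gs \<ge> a - s * norm v" using s by simp
          have "s * norm v < t * norm v" using st nv by simp
          hence gs2: "s * norm v < gs" using gs1 st a by linarith
          have "gt \<le> gs + norm ((t - s) *\<^sub>R v)"
          proof -
            have "x + t *\<^sub>R v = (x + s *\<^sub>R v) + (t - s) *\<^sub>R v" by (simp add: algebra_simps)
            moreover have "norm ((x + s *\<^sub>R v) + (t - s) *\<^sub>R v) \<le> norm (x + s *\<^sub>R v) + norm ((t - s) *\<^sub>R v)"
              by (rule norm_triangle_ineq)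
            ultimately show ?thesis unfolding gt_def gs_def by (simp only:)
          qed
          hence gt1: "gt \<le> gs + (t - s) * norm v" using st by simp
          show ?thesis
          proof (cases "gt \<le> gs")
            case True
            have "M a gt \<le> M a gs" using mono True by (simp add: gt_def)
            have "s * norm v / M a gs < t * norm v / M a gs" using st nv Ms by (simp add: divide_strict_right_mono)
            also have "\<dots> \<le> t * norm v / M a gt"
              using \<open>M a gt \<le> M a gs\<close> Mt st nv by (intro divide_left_mono) auto
            finally show ?thesis using eqs eqt by simp
          next
            case False
            have "s * norm v > 0" using s nv by simp
            hence gsp: "gs > 0" using gs2 by linarith
            have "M a gt / gt \<le> M a gs / gs" using dec[of gs gt] gsp False by simp
            hence k1: "M a gt * gs \<le> M a gs * gt" using gsp False by (simp add: field_simps)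
            have k2: "s * gt < t * gs"
            proof -
              have "s * gt \<le> s * (gs + (t - s) * norm v)" using gt1 s by (simp add: mult_left_mono)
              also have "\<dots> = s * gs + (t - s) * (s * norm v)" by (simp add: algebra_simps)
              also have "\<dots> < s * gs + (t - s) * gs" using gs2 st by simp
              also have "\<dots> = t * gs" by (simp add: algebra_simps)
              finally show ?thesis .
            qed
            have "s * M a gt * gs \<le> s * M a gs * gt" using k1 s by (simp add: mult_left_mono mult.assoc)
            also have "\<dots> < t * M a gs * gs" using k2 Ms by (simp add: mult.commute mult.left_commute)
            finally have "s * M a gt < t * M a gs" using gsp by simp
            hence k3: "(s * M a gt) * norm v < (t * M a gs) * norm v" using nv
              by (rule mult_strict_right_mono)
            have q1: "s * norm v / M a gs = ((s * M a gt) * norm v) / (M a gs * M a gt)"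
              using Ms Mt by (simp add: field_simps)
            have q2: "t * norm v / M a gt = ((t * M a gs) * norm v) / (M a gs * M a gt)"
              using Ms Mt by (simp add: field_simps)
            have "((s * M a gt) * norm v) / (M a gs * M a gt) < ((t * M a gs) * norm v) / (M a gs * M a gt)"
              using k3 Ms Mt by (intro divide_strict_right_mono) simp_all
            hence "s * norm v / M a gs < t * norm v / M a gt" using q1 q2 by simp
            thus ?thesis using eqs eqt by simp
          qed
        qed
      qed
      show ?thesis
      proof (intro exI[of _ c] conjI allI impI)
        show "c > 0" by (rule c)
        fix r assume r: "0 < r \<and> r < c"
        let ?B = "dball (rhoM M) x r"
        have xB: "x \<in> ?B" using r rself by (simp add: dball_def)
        have inB: "norm (y - x) < a/4" if "y \<in> ?B" for y
        proof (rule ccontr)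
          assume "\<not> norm (y - x) < a/4"
          hence "c \<le> rhoM M x y" using LB by simp
          thus False using that r by (simp add: dball_def)
        qed
        have clB: "norm (y - x) \<le> a/4" if "y \<in> closure ?B" for y
        proof -
          have "?B \<subseteq> cball x (a/4)"
          proof
            fix z assume "z \<in> ?B"
            hence "norm (z - x) < a/4" by (rule inB)
            thus "z \<in> cball x (a/4)" by (simp add: dist_norm norm_minus_commute)
          qed
          hence "closure ?B \<subseteq> cball x (a/4)" by (rule closure_minimal) simp
          thus ?thesis using that by (auto simp: dist_norm norm_minus_commute)
        qed
        have cont: "isCont (rhoM M x) y" if yn: "norm (y - x) \<le> a/4" for y
        proof -
          have "a \<le> norm y + norm (x - y)" using norm_triangle_sub[of x y] unfolding a_def by simp
          moreover have "norm (x - y) \<le> a/4" using yn by (simp add: norm_minus_commute)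
          ultimately have ny: "norm y > 0" using a by linarith
          have cM: "isCont (M a) (norm y)" using modinc_cont[OF mi ny] by simp
          have cn: "isCont (\<lambda>z::'a. norm z) y" by (rule continuous_norm) (rule continuous_ident)
          have c1: "isCont (\<lambda>z. M a (norm z)) y" using isCont_o2[OF cn cM] .
          have cnum: "isCont (\<lambda>z. norm (x - z)) y" by (intro continuous_intros)
          have "M a (norm y) \<noteq> 0" using Mp[of "norm y"] by simp
          hence "isCont (\<lambda>z. norm (x - z) / M a (norm z)) y"
            by (rule isCont_divide[OF cnum c1])
          moreover have "rhoM M x = (\<lambda>z. norm (x - z) / M a (norm z))" by (rule ext) (rule rho_eq)
          ultimately show ?thesis by simp
        qed
        have fr: "rhoM M x y = r \<and> norm (y - x) \<le> a/4" if "y \<in> frontier ?B" for y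
        proof -
          have "y \<in> closure ?B - interior ?B" using that by (simp only: frontier_def)
          hence yc: "y \<in> closure ?B" and yi: "y \<notin> interior ?B" by simp_all
          have n: "norm (y - x) \<le> a/4" using clB yc by simp
          have tl: "(rhoM M x \<longlongrightarrow> rhoM M x y) (at y)" using cont[OF n] unfolding isCont_def .
          have "\<not> rhoM M x y < r"
          proof
            assume lt: "rhoM M x y < r"
            have "eventually (\<lambda>z. rhoM M x z < r) (at y)" using order_tendstoD(2)[OF tl lt] .
            then obtain d where d: "d > 0" "\<forall>z. z \<noteq> y \<and> dist z y < d \<longrightarrow> rhoM M x z < r"
              unfolding eventually_at by auto
            have "ball y d \<subseteq> ?B"
            proof
              fix z assume z: "z \<in> ball y d"
              show "z \<in> ?B"
              proof (cases "z = y")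
                case True thus ?thesis using lt by (simp add: dball_def)
              next
                case False thus ?thesis using z d(2) by (simp add: dball_def dist_commute)
              qed
            qed
            hence "ball y d \<subseteq> interior ?B" by (rule interior_maximal[OF _ open_ball])
            moreover have "y \<in> ball y d" using d(1) by simp
            ultimately have "y \<in> interior ?B" by (rule subsetD)
            thus False using yi by simp
          qed
          moreover have "\<not> rhoM M x y > r"
          proof
            assume gt: "rhoM M x y > r"
            have "eventually (\<lambda>z. rhoM M x z > r) (at y)" using order_tendstoD(1)[OF tl gt] .
            then obtain d where d: "d > 0" "\<forall>z. z \<noteq> y \<and> dist z y < d \<longrightarrow> rhoM M x z > r"
              unfolding eventually_at by auto
            obtain z where z: "z \<in> ?B" "dist z y < d" using yc d(1) unfolding closure_approachable by blast
            show False
            proof (cases "z = y")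
              case True thus False using z gt by (simp add: dball_def)
            next
              case False thus False using z d(2) by (force simp add: dball_def)
            qed
          qed
          ultimately show ?thesis using n by simp
        qed
        show "star_shaped_wrt ?B x" unfolding star_shaped_wrt_def
        proof (intro allI impI)
          fix v :: 'a assume v: "v \<noteq> 0"
          have ex: "\<exists>t\<ge>0. x + t *\<^sub>R v \<in> frontier ?B"
          proof (rule exist_frontier[OF xB])
            show "(a/4) / norm v \<ge> 0" using a by simp
            have "norm ((x + ((a/4) / norm v) *\<^sub>R v) - x) = a/4" using v a by simp
            hence "c \<le> rhoM M x (x + ((a/4) / norm v) *\<^sub>R v)" using LB by simp
            thus "x + ((a/4) / norm v) *\<^sub>R v \<notin> ?B" using r by (simp add: dball_def)
          qed
          have un: False if t: "0 \<le> t" "t < t'" "x + t *\<^sub>R v \<in> frontier ?B" "x + t' *\<^sub>R v \<in> frontier ?B" for t t'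
          proof -
            have f1: "rhoM M x (x + t *\<^sub>R v) = r" using fr[OF t(3)] by simp
            have f2: "rhoM M x (x + t' *\<^sub>R v) = r" and n2: "norm ((x + t' *\<^sub>R v) - x) \<le> a/4"
              using fr[OF t(4)] by simp_all
            have "t' * norm v \<le> a/4" using n2 t by simp
            from SM[OF t(1) t(2) this v] f1 f2 show False by simp
          qed
          show "\<exists>!t. 0 \<le> t \<and> x + t *\<^sub>R v \<in> frontier ?B"
            by (rule uniq[OF ex]) (rule un)
        qed
      qed
    qed
  qed
qed

end
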